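(* There exist constants $\underline{c}>0$ and $\overline{c}>0$ such that $$\underline{c}\,\|\widetilde W\|_{L^2}^2\le\mathcal{L}_\#(W)\le\overline{c}\,\|\widetilde W\|_{L^2}^2$$ for all $W\in\mathcal{C}_0$, where $\widetilde W=W_{\rm sh}-W$.
   Context: Let $\Phi:\mathbb{R}\to\mathbb{R}$ be twice continuously differentiable on $[-1,1]$ with: $\Phi'(-1)=-1$, $\Phi'(1)=1$; $\Phi''\ge0$ on $[-1,1]$; $\Phi(-1)=\Phi(1)$; $\Phi''(-1)<1$, $\Phi''(1)<1$; and $g_\Phi(w):=\int_{-1}^w(v-\Phi'(v))\,dv>0$ for all $w\in(-1,1)$. $W_{\rm sh}(\varphi)=\mathrm{sgn}(\varphi)$; $\mathcal{H}=\{W\text{ measurable}: W_{\rm sh}-W\in L^2(\mathbb{R})\}$; $\mathcal{L}_\#(W)=\int_{\mathbb{R}}g_\Phi(W(\varphi))\,d\varphi$. $\mathcal{C}$ is the set of $W\in\mathcal{H}$ that are a.e. equal to a nondecreasing function with $W(\varphi)\to\pm1$ as $\varphi\to\pm\infty$; $\mathcal{C}_0$ is the set of $W\in\mathcal{C}$ with $0\le W\le1$ a.e. on $[0,\infty)$ and $-1\le W\le0$ a.e. on $(-\infty,0]$. *)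

theory Defs
  imports "HOL-Analysis.Analysis"
begin

definition Wsh :: "real \<Rightarrow> real" where
  "Wsh \<phi> = sgn \<phi>"

definition in_H :: "(real \<Rightarrow> real) \<Rightarrow> bool" where
  "in_H W \<longleftrightarrow> W \<in> borel_measurable lebesgue \<and>
     integrable lebesgue (\<lambda>\<phi>. (Wsh \<phi> - W \<phi>)\<^sup>2)"

definition L2sq :: "(real \<Rightarrow> real) \<Rightarrow> real" where
  "L2sq W = (\<integral>\<phi>. (Wsh \<phi> - W \<phi>)\<^sup>2 \<partial>lebesgue)"

definition in_C :: "(real \<Rightarrow> real) \<Rightarrow> bool" where
  "in_C W \<longleftrightarrow> in_H W \<and>
     (\<exists>V::real \<Rightarrow> real. mono V \<and> (AE \<phi> in lebesgue. W \<phi> = V \<phi>) \<and>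
        (V \<longlongrightarrow> 1) at_top \<and> (V \<longlongrightarrow> -1) at_bot)"

definition in_C0 :: "(real \<Rightarrow> real) \<Rightarrow> bool" where
  "in_C0 W \<longleftrightarrow> in_C W \<and>
     (AE \<phi> in lebesgue. \<phi> \<ge> 0 \<longrightarrow> 0 \<le> W \<phi> \<and> W \<phi> \<le> 1) \<and>
     (AE \<phi> in lebesgue. \<phi> \<le> 0 \<longrightarrow> -1 \<le> W \<phi> \<and> W \<phi> \<le> 0)"

definition g_Phi :: "(real \<Rightarrow> real) \<Rightarrow> real \<Rightarrow> real" where
  "g_Phi dPhi w = integral {-1..w} (\<lambda>v. v - dPhi v)"

definition Lsharp :: "(real \<Rightarrow> real) \<Rightarrow> (real \<Rightarrow> real) \<Rightarrow> real" where
  "Lsharp dPhi W = (\<integral>\<phi>. g_Phi dPhi (W \<phi>) \<partial>lebesgue)"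

end

theory Submission
  imports Defs
begin

lemma right_zero:
  fixes f f' f'' :: "real \<Rightarrow> real"
  assumes ab: "a \<le> b" and cf: "continuous_on {a..b} f" and cf': "continuous_on {a..b} f'"
    and df: "\<And>x. a < x \<Longrightarrow> x < b \<Longrightarrow> (f has_real_derivative f' x) (at x)"
    and df': "\<And>x. a < x \<Longrightarrow> x < b \<Longrightarrow> (f' has_real_derivative f'' x) (at x)"
    and pos: "\<And>x. a < x \<Longrightarrow> x < b \<Longrightarrow> f'' x \<ge> 0"
    and fb: "f b = 0" and f'b: "f' b = 0"
  shows "f a \<ge> 0"
proof -
  have "f' x \<le> 0" if "a \<le> x" "x \<le> b" for x
  proof -
    have "f' x \<le> f' b"
      apply (rule DERIV_nonneg_imp_increasing_open[OF \<open>x \<le> b\<close>])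
      using that df' pos apply force
      using cf' that by (auto intro: continuous_on_subset)
    thus ?thesis using f'b by simp
  qed
  have "(\<lambda>x. - f x) a \<le> (\<lambda>x. - f x) b"
    apply (rule DERIV_nonneg_imp_increasing_open[OF ab])
    subgoal for x using df[of x] \<open>\<And>x. a \<le> x \<Longrightarrow> x \<le> b \<Longrightarrow> f' x \<le> 0\<close>[of x]
      by (intro exI[of _ "- f' x"]) (auto intro!: derivative_eq_intros)
    using cf by (auto intro: continuous_intros)
  thus ?thesis using fb by simp
qed

lemma left_zero:
  fixes f f' f'' :: "real \<Rightarrow> real"
  assumes ab: "a \<le> b" and cf: "continuous_on {a..b} f" and cf': "continuous_on {a..b} f'"
    and df: "\<And>x. a < x \<Longrightarrow> x < b \<Longrightarrow> (f has_real_derivative f' x) (at x)"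
    and df': "\<And>x. a < x \<Longrightarrow> x < b \<Longrightarrow> (f' has_real_derivative f'' x) (at x)"
    and pos: "\<And>x. a < x \<Longrightarrow> x < b \<Longrightarrow> f'' x \<ge> 0"
    and fa: "f a = 0" and f'a: "f' a = 0"
  shows "f b \<ge> 0"
proof -
  have "f' x \<ge> 0" if "a \<le> x" "x \<le> b" for x
  proof -
    have "f' a \<le> f' x"
      apply (rule DERIV_nonneg_imp_increasing_open[OF \<open>a \<le> x\<close>])
      using that df' pos apply force
      using cf' that by (auto intro: continuous_on_subset)
    thus ?thesis using f'a by simp
  qed
  have "f a \<le> f b"
    apply (rule DERIV_nonneg_imp_increasing_open[OF ab])
    subgoal for x using df[of x] \<open>\<And>x. a \<le> x \<Longrightarrow> x \<le> b \<Longrightarrow> f' x \<ge> 0\<close>[of x]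
      by auto
    using cf by auto
  thus ?thesis using fa by simp
qed


theorem lemma3p12:
  fixes Phi dPhi ddPhi :: "real \<Rightarrow> real"
  assumes d1: "\<And>x. x \<in> {-1..1} \<Longrightarrow> (Phi has_real_derivative dPhi x) (at x within {-1..1})"
    and d2: "\<And>x. x \<in> {-1..1} \<Longrightarrow> (dPhi has_real_derivative ddPhi x) (at x within {-1..1})"
    and cont: "continuous_on {-1..1} ddPhi"
    and bl: "dPhi (-1) = -1" and br: "dPhi 1 = 1"
    and convex: "\<And>x. x \<in> {-1..1} \<Longrightarrow> ddPhi x \<ge> 0"
    and eq: "Phi (-1) = Phi 1"
    and sl: "ddPhi (-1) < 1" and sr: "ddPhi 1 < 1"
    and gpos: "\<And>w. w \<in> {-1<..<1} \<Longrightarrow> g_Phi dPhi w > 0"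
  shows "\<exists>cl cu::real. cl > 0 \<and> cu > 0 \<and>
           (\<forall>W. in_C0 W \<longrightarrow> cl * L2sq W \<le> Lsharp dPhi W \<and> Lsharp dPhi W \<le> cu * L2sq W)"
proof -
  define G where "G = g_Phi dPhi"
  define G' where "G' = (\<lambda>w::real. w - dPhi w)"
  define G'' where "G'' = (\<lambda>w::real. 1 - ddPhi w)"
  have cdPhi: "continuous_on {-1..1} dPhi" using d2 by (rule DERIV_continuous_on)
  have cG': "continuous_on {-1..1} G'" unfolding G'_def using cdPhi by (intro continuous_intros)
  have dGw: "(G has_real_derivative G' x) (at x within {-1..1})" if "x \<in> {-1..1}" for x
    unfolding G_def g_Phi_def
    using integral_has_real_derivative[OF cG'[unfolded G'_def] that] unfolding G'_def .
  have cG: "continuous_on {-1..1} G" using dGw by (rule DERIV_continuous_on)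
  have dG'w: "(G' has_real_derivative G'' x) (at x within {-1..1})" if "x \<in> {-1..1}" for x
    unfolding G'_def G''_def using d2[OF that] by (auto intro!: derivative_eq_intros)
  have intr: "at x within {-1..1} = at x" if "-1 < x" "x < 1" for x :: real
    using that by (intro at_within_interior) auto
  have dG: "(G has_real_derivative G' x) (at x)" if "-1 < x" "x < 1" for x
    using dGw[of x] intr[OF that] that by auto
  have dG': "(G' has_real_derivative G'' x) (at x)" if "-1 < x" "x < 1" for x
    using dG'w[of x] intr[OF that] that by auto
  have G'1: "G' 1 = 0" and G'm1: "G' (-1) = 0" using bl br by (auto simp: G'_def)
  have Gm1: "G (-1) = 0" by (simp add: G_def g_Phi_def)
  have G1: "G 1 = 0"
  proof -
    have "(dPhi has_integral Phi 1 - Phi (-1)) {-1..1}"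
    proof (rule fundamental_theorem_of_calculus)
      show "(Phi has_vector_derivative dPhi x) (at x within {-1..1})" if "x \<in> {-1..1}" for x
        using d1[OF that] by (simp add: has_real_derivative_iff_has_vector_derivative)
    qed simp
    moreover have "((\<lambda>v::real. v) has_integral ((\<lambda>v. v^2/2) 1 - (\<lambda>v. v^2/2) (-1))) {-1..1}"
    proof (rule fundamental_theorem_of_calculus)
      show "((\<lambda>v::real. v^2/2) has_vector_derivative x) (at x within {-1..1})" for x
      proof -
        have "((\<lambda>v::real. v^2/2) has_real_derivative x) (at x within {-1..1})"
          by (rule derivative_eq_intros refl | simp)+
        thus ?thesis by (simp add: has_real_derivative_iff_has_vector_derivative)
      qed
    qed simp
    ultimately have "((\<lambda>v. v - dPhi v) has_integral
        (((\<lambda>v. v^2/2) 1 - (\<lambda>v. v^2/2) (-1)) - (Phi 1 - Phi (-1)))) {-1..1}"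
      by (intro has_integral_diff)
    hence "((\<lambda>v. v - dPhi v) has_integral 0) {-1..1}" using eq by simp
    thus ?thesis unfolding G_def g_Phi_def by (rule integral_unique)
  qed
  have G''pos: "1 - G'' x \<ge> 0" if "-1 \<le> x" "x \<le> 1" for x
    using convex[of x] that by (auto simp: G''_def)
  have Rup: "G w \<le> (1-w)^2/2" if "0 \<le> w" "w \<le> 1" for w
  proof -
    have "(\<lambda>x. (1-x)^2/2 - G x) w \<ge> 0"
    proof (rule right_zero[where a=w and b=1 and f="\<lambda>x. (1-x)^2/2 - G x" and f'="\<lambda>x. (x-1) - G' x" and f''="\<lambda>x. 1 - G'' x"])
      show "continuous_on {w..1} (\<lambda>x. (1-x)^2/2 - G x)"
        using that by (intro continuous_intros continuous_on_subset[OF cG]) auto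
      show "continuous_on {w..1} (\<lambda>x. (x-1) - G' x)"
        using that by (intro continuous_intros continuous_on_subset[OF cG']) auto
      show "((\<lambda>x. (1-x)^2/2 - G x) has_real_derivative (x-1) - G' x) (at x)" if "w < x" "x < 1" for x
        using dG[of x] that \<open>0 \<le> w\<close> by (auto intro!: derivative_eq_intros simp: field_simps)
      show "(( \<lambda>x. (x-1) - G' x) has_real_derivative 1 - G'' x) (at x)" if "w < x" "x < 1" for x
        using dG'[of x] that \<open>0 \<le> w\<close> by (auto intro!: derivative_eq_intros)
      show "1 - G'' x \<ge> 0" if "w < x" "x < 1" for x using G''pos[of x] that \<open>0 \<le> w\<close> by auto
    qed (use that G1 G'1 in auto)
    thus ?thesis by simp
  qed
  have Lup: "G w \<le> (1+w)^2/2" if "-1 \<le> w" "w \<le> 0" for w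
  proof -
    have "(\<lambda>x. (1+x)^2/2 - G x) w \<ge> 0"
    proof (rule left_zero[where a="-1" and b=w and f="\<lambda>x. (1+x)^2/2 - G x" and f'="\<lambda>x. (1+x) - G' x" and f''="\<lambda>x. 1 - G'' x"])
      show "continuous_on {-1..w} (\<lambda>x. (1+x)^2/2 - G x)"
        using that by (intro continuous_intros continuous_on_subset[OF cG]) auto
      show "continuous_on {-1..w} (\<lambda>x. (1+x) - G' x)"
        using that by (intro continuous_intros continuous_on_subset[OF cG']) auto
      show "((\<lambda>x. (1+x)^2/2 - G x) has_real_derivative (1+x) - G' x) (at x)" if "-1 < x" "x < w" for x
        using dG[of x] that \<open>w \<le> 0\<close> by (auto intro!: derivative_eq_intros simp: field_simps)
      show "(( \<lambda>x. (1+x) - G' x) has_real_derivative 1 - G'' x) (at x)" if "-1 < x" "x < w" for x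
        using dG'[of x] that \<open>w \<le> 0\<close> by (auto intro!: derivative_eq_intros)
      show "1 - G'' x \<ge> 0" if "-1 < x" "x < w" for x using G''pos[of x] that \<open>w \<le> 0\<close> by auto
    qed (use that Gm1 G'm1 in auto)
    thus ?thesis by simp
  qed
  have Rlow: "\<exists>c>0. \<forall>w. 0 \<le> w \<and> w \<le> 1 \<longrightarrow> c * (1-w)^2 \<le> G w"
  proof -
    define m where "m = (1 - ddPhi 1)/2"
    have m: "m > 0" using sr by (simp add: m_def)
    have "(1::real) \<in> {-1..1}" by simp
    then obtain d where d: "d > 0" and dd: "\<And>x. x \<in> {-1..1} \<Longrightarrow> dist x 1 < d \<Longrightarrow> dist (ddPhi x) (ddPhi 1) < m"
      using cont m unfolding continuous_on_iff by blast
    define e where "e = min (d/2) (1/2)"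
    have e: "e > 0" "e \<le> 1/2" "e < d" using d by (auto simp: e_def)
    have near: "m/2 * (1-w)^2 \<le> G w" if "1 - e \<le> w" "w \<le> 1" for w
    proof -
      have "(\<lambda>x. G x - m*(1-x)^2/2) w \<ge> 0"
      proof (rule right_zero[where a=w and b=1 and f="\<lambda>x. G x - m*(1-x)^2/2"
            and f'="\<lambda>x. G' x + m*(1-x)" and f''="\<lambda>x. G'' x - m"])
        show "continuous_on {w..1} (\<lambda>x. G x - m*(1-x)^2/2)"
          using that e by (intro continuous_intros continuous_on_subset[OF cG]) auto
        show "continuous_on {w..1} (\<lambda>x. G' x + m*(1-x))"
          using that e by (intro continuous_intros continuous_on_subset[OF cG']) auto
        show "((\<lambda>x. G x - m*(1-x)^2/2) has_real_derivative G' x + m*(1-x)) (at x)" if "w < x" "x < 1" for x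
          using dG[of x] that \<open>1 - e \<le> w\<close> e by (auto intro!: derivative_eq_intros simp: field_simps)
        show "((\<lambda>x. G' x + m*(1-x)) has_real_derivative G'' x - m) (at x)" if "w < x" "x < 1" for x
          using dG'[of x] that \<open>1 - e \<le> w\<close> e by (auto intro!: derivative_eq_intros)
        show "G'' x - m \<ge> 0" if "w < x" "x < 1" for x
        proof -
          have "dist (ddPhi x) (ddPhi 1) < m" using that \<open>1 - e \<le> w\<close> e
            by (intro dd) (auto simp: dist_real_def)
          thus ?thesis unfolding G''_def m_def dist_real_def using abs_ge_self[of "ddPhi x - ddPhi 1"] by argo
        qed
      qed (use that G1 G'1 in auto)
      thus ?thesis by simp
    qed
    have "compact {0..1-e}" "{0..1-e} \<noteq> {}" using e by auto
    then obtain z where z: "z \<in> {0..1-e}" and zmin: "\<And>y. y \<in> {0..1-e} \<Longrightarrow> G z \<le> G y"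
      using continuous_attains_inf[of "{0..1-e}" G] continuous_on_subset[OF cG, of "{0..1-e}"] e by force
    have Gz: "G z > 0" using gpos[of z] z e by (auto simp: G_def)
    show ?thesis
    proof (intro exI[of _ "min (m/2) (G z)"] conjI allI impI)
      show "min (m/2) (G z) > 0" using m Gz by auto
      fix w :: real assume w: "0 \<le> w \<and> w \<le> 1"
      show "min (m/2) (G z) * (1-w)^2 \<le> G w"
      proof (cases "1 - e \<le> w")
        case True
        have "min (m/2) (G z) * (1-w)^2 \<le> m/2 * (1-w)^2" by (intro mult_right_mono) auto
        thus ?thesis using near[of w] True w by (smt (verit))
      next
        case False
        have "(1-w)^2 \<le> 1" using w by (intro power_le_one) auto
        hence "min (m/2) (G z) * (1-w)^2 \<le> G z * 1" using Gz
          by (intro mult_mono) auto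
        thus ?thesis using zmin[of w] False w by auto
      qed
    qed
  qed
  have Llow: "\<exists>c>0. \<forall>w. -1 \<le> w \<and> w \<le> 0 \<longrightarrow> c * (1+w)^2 \<le> G w"
  proof -
    define m where "m = (1 - ddPhi (-1))/2"
    have m: "m > 0" using sl by (simp add: m_def)
    have "(-1::real) \<in> {-1..1}" by simp
    then obtain d where d: "d > 0" and dd: "\<And>x. x \<in> {-1..1} \<Longrightarrow> dist x (-1) < d \<Longrightarrow> dist (ddPhi x) (ddPhi (-1)) < m"
      using cont m unfolding continuous_on_iff by blast
    define e where "e = min (d/2) (1/2)"
    have e: "e > 0" "e \<le> 1/2" "e < d" using d by (auto simp: e_def)
    have near: "m/2 * (1+w)^2 \<le> G w" if "-1 \<le> w" "w \<le> -1 + e" for w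
    proof -
      have "(\<lambda>x. G x - m*(1+x)^2/2) w \<ge> 0"
      proof (rule left_zero[where a="-1" and b=w and f="\<lambda>x. G x - m*(1+x)^2/2"
            and f'="\<lambda>x. G' x - m*(1+x)" and f''="\<lambda>x. G'' x - m"])
        show "continuous_on {-1..w} (\<lambda>x. G x - m*(1+x)^2/2)"
          using that e by (intro continuous_intros continuous_on_subset[OF cG]) auto
        show "continuous_on {-1..w} (\<lambda>x. G' x - m*(1+x))"
          using that e by (intro continuous_intros continuous_on_subset[OF cG']) auto
        show "((\<lambda>x. G x - m*(1+x)^2/2) has_real_derivative G' x - m*(1+x)) (at x)" if "-1 < x" "x < w" for x
          using dG[of x] that \<open>w \<le> -1 + e\<close> e by (auto intro!: derivative_eq_intros simp: field_simps)
        show "((\<lambda>x. G' x - m*(1+x)) has_real_derivative G'' x - m) (at x)" if "-1 < x" "x < w" for x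
          using dG'[of x] that \<open>w \<le> -1 + e\<close> e by (auto intro!: derivative_eq_intros)
        show "G'' x - m \<ge> 0" if "-1 < x" "x < w" for x
        proof -
          have "dist (ddPhi x) (ddPhi (-1)) < m" using that \<open>w \<le> -1 + e\<close> e
            by (intro dd) (auto simp: dist_real_def)
          thus ?thesis unfolding G''_def m_def dist_real_def using abs_ge_self[of "ddPhi x - ddPhi (-1)"] by argo
        qed
      qed (use that Gm1 G'm1 in auto)
      thus ?thesis by simp
    qed
    have "compact {-1+e..0}" "{-1+e..0} \<noteq> {}" using e by auto
    then obtain z where z: "z \<in> {-1+e..0}" and zmin: "\<And>y. y \<in> {-1+e..0} \<Longrightarrow> G z \<le> G y"
      using continuous_attains_inf[of "{-1+e..0}" G] continuous_on_subset[OF cG, of "{-1+e..0}"] e by force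
    have Gz: "G z > 0" using gpos[of z] z e by (auto simp: G_def)
    show ?thesis
    proof (intro exI[of _ "min (m/2) (G z)"] conjI allI impI)
      show "min (m/2) (G z) > 0" using m Gz by auto
      fix w :: real assume w: "-1 \<le> w \<and> w \<le> 0"
      show "min (m/2) (G z) * (1+w)^2 \<le> G w"
      proof (cases "w \<le> -1 + e")
        case True
        have "min (m/2) (G z) * (1+w)^2 \<le> m/2 * (1+w)^2" by (intro mult_right_mono) auto
        thus ?thesis using near[of w] True w by (smt (verit))
      next
        case False
        have "(1+w)^2 \<le> 1" using w by (intro power_le_one) auto
        hence "min (m/2) (G z) * (1+w)^2 \<le> G z * 1" using Gz
          by (intro mult_mono) auto
        thus ?thesis using zmin[of w] False w by auto
      qed
    qed
  qed
  obtain cR where cR: "cR > 0" "\<And>w. 0 \<le> w \<Longrightarrow> w \<le> 1 \<Longrightarrow> cR * (1-w)^2 \<le> G w"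
    using Rlow by blast
  obtain cL where cL: "cL > 0" "\<And>w. -1 \<le> w \<Longrightarrow> w \<le> 0 \<Longrightarrow> cL * (1+w)^2 \<le> G w"
    using Llow by blast
  define cl where "cl = min cR cL"
  have cl: "cl > 0" using cR cL by (simp add: cl_def)
  have pw: "cl * (Wsh p - v)^2 \<le> G v \<and> G v \<le> 1/2 * (Wsh p - v)^2"
    if "p \<noteq> 0" "p \<ge> 0 \<longrightarrow> 0 \<le> v \<and> v \<le> 1" "p \<le> 0 \<longrightarrow> -1 \<le> v \<and> v \<le> 0" for p v :: real
  proof (cases "p > 0")
    case True
    hence W1: "Wsh p = 1" by (simp add: Wsh_def)
    have v: "0 \<le> v" "v \<le> 1" using that True by auto
    have "cl * (1-v)^2 \<le> cR * (1-v)^2" by (intro mult_right_mono) (auto simp: cl_def)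
    then show ?thesis using W1 Rup[OF v] cR(2)[OF v] by auto
  next
    case False
    hence W1: "Wsh p = -1" using that by (simp add: Wsh_def)
    have v: "-1 \<le> v" "v \<le> 0" using that False by auto
    have sq: "(-1 - v)^2 = (1+v)^2" by algebra
    have "cl * (1+v)^2 \<le> cL * (1+v)^2" by (intro mult_right_mono) (auto simp: cl_def)
    then show ?thesis using W1 sq Lup[OF v] cL(2)[OF v] by auto
  qed
  have main: "\<forall>W. in_C0 W \<longrightarrow> cl * L2sq W \<le> Lsharp dPhi W \<and> Lsharp dPhi W \<le> 1/2 * L2sq W"
  proof (intro allI impI)
    fix W assume W: "in_C0 W"
    from W have Wm: "W \<in> borel_measurable lebesgue"
      and Pint: "integrable lebesgue (\<lambda>p. (Wsh p - W p)^2)"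
      and A1: "AE p in lebesgue. p \<ge> 0 \<longrightarrow> 0 \<le> W p \<and> W p \<le> 1"
      and A2: "AE p in lebesgue. p \<le> 0 \<longrightarrow> -1 \<le> W p \<and> W p \<le> 0"
      unfolding in_C0_def in_C_def in_H_def by auto
    have A0: "AE p in lebesgue. p \<noteq> (0::real)" by (rule AE_completion[OF AE_lborel_singleton])
    have AEb: "AE p in lebesgue. cl * (Wsh p - W p)^2 \<le> G (W p) \<and> G (W p) \<le> 1/2 * (Wsh p - W p)^2"
      using A0 A1 A2 by eventually_elim (rule pw)
    define G2 where "G2 = (\<lambda>x. G (max (-1) (min 1 x)))"
    have cG2: "continuous_on UNIV G2" unfolding G2_def
      by (rule continuous_on_compose2[OF cG]) (auto intro!: continuous_intros)
    have "(\<lambda>p. G2 (W p)) \<in> borel_measurable lebesgue" by (rule borel_measurable_continuous_on[OF cG2 Wm])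
    moreover have "AE p in lebesgue. G2 (W p) = G (W p)" using A1 A2 by eventually_elim (auto simp: G2_def)
    ultimately have Gm: "(\<lambda>p. G (W p)) \<in> borel_measurable lebesgue" by (rule borel_measurable_AE)
    have Pint2: "integrable lebesgue (\<lambda>p. 1/2 * (Wsh p - W p)^2)" using Pint by (rule integrable_mult_right)
    have Pint3: "integrable lebesgue (\<lambda>p. cl * (Wsh p - W p)^2)" using Pint by (rule integrable_mult_right)
    have AEn: "AE p in lebesgue. norm (G (W p)) \<le> norm (1/2 * (Wsh p - W p)^2)"
      using AEb
    proof eventually_elim
      case (elim p)
      have "0 \<le> cl * (Wsh p - W p)^2" using cl by simp
      thus ?case using elim by simp
    qed
    have Gint: "integrable lebesgue (\<lambda>p. G (W p))"
      by (rule Bochner_Integration.integrable_bound[OF Pint2 Gm AEn])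
    have Ls: "Lsharp dPhi W = (\<integral>p. G (W p) \<partial>lebesgue)" by (simp add: Lsharp_def G_def)
    have "cl * L2sq W = (\<integral>p. cl * (Wsh p - W p)^2 \<partial>lebesgue)" by (simp add: L2sq_def)
    also have "\<dots> \<le> (\<integral>p. G (W p) \<partial>lebesgue)"
      by (rule integral_mono_AE[OF Pint3 Gint]) (use AEb in auto)
    finally have "cl * L2sq W \<le> Lsharp dPhi W" using Ls by simp
    have "(\<integral>p. G (W p) \<partial>lebesgue) \<le> (\<integral>p. 1/2 * (Wsh p - W p)^2 \<partial>lebesgue)"
      by (rule integral_mono_AE[OF Gint Pint2]) (use AEb in auto)
    also have "\<dots> = 1/2 * L2sq W" by (simp add: L2sq_def)
    finally have "Lsharp dPhi W \<le> 1/2 * L2sq W" using Ls by simp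
    with \<open>cl * L2sq W \<le> Lsharp dPhi W\<close> show "cl * L2sq W \<le> Lsharp dPhi W \<and> Lsharp dPhi W \<le> 1/2 * L2sq W" by simp
  qed

  show ?thesis using cl main by (intro exI[of _ cl] exI[of _ "1/2"]) auto
qed

end
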